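(* Let $\ell\ge1$, $N=2^\ell$, let ${\mathbf x}_0,\dots,{\mathbf x}_{\omega-1}\in\mathbb{F}_2^\ell$ be distinct, and let $D=P_{{\mathbf x}_0}+\cdots+P_{{\mathbf x}_{\omega-1}}$ (the dyadic matrix whose signature has support $\{{\mathbf x}_0,\dots,{\mathbf x}_{\omega-1}\}$). Let $R$ be the number of ordered pairs $\big((u,v),(u',v')\big)$ with $u,v,u',v'\in\{0,\dots,\omega-1\}$, $u\ne v$, $u'\ne v'$, $u\ne u'$, $v\ne v'$ and ${\mathbf x}_u+{\mathbf x}_v={\mathbf x}_{u'}+{\mathbf x}_{v'}$; write $R=R^{c}+R^{nc}$, where $R^{c}$ counts those pairs with $u=v'$ and $v=u'$, and $R^{nc}$ the remaining ones. Then the number of $4$-cycles in the Tanner graph of $D$ is $$\mathcal{N}_4=\frac{2^\ell}{4}\left(R^{c}+R^{nc}\right).$$ In particular, if $\omega\ge2$ the Tanner graph of $D$ has girth $4$.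
   Context: Rows and columns of $N\times N$ binary matrices are indexed by $\mathbb{F}_2^\ell$ via ${\mathbf x}=(x_1,\dots,x_\ell)\leftrightarrow 1+\sum_i x_i2^{i-1}$. For ${\mathbf a}\in\mathbb{F}_2^\ell$, $P_{\mathbf a}$ is the $N\times N$ binary matrix with $(P_{\mathbf a})_{{\mathbf x},{\mathbf y}}=1$ iff ${\mathbf y}={\mathbf x}+{\mathbf a}$ (the dyadic permutation matrix with signature the indicator vector of ${\mathbf a}$). The Tanner graph of a binary matrix $H$ is the bipartite graph with one check node per row, one variable node per column, and an edge between row $r$ and column $c$ iff $H_{r,c}=1$. A $k$-cycle is a closed walk with $k$ edges and distinct vertices and edges; the girth is the length of a shortest cycle. *)

theory Defs
  imports Main "HOL-Library.Extended_Nat"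
begin

text \<open>Vectors of F_2^l are boolean lists of length l (bit i = coordinate x_(i+1));
  F_2 addition is exclusive or, i.e. inequality on bool.\<close>

definition vecs :: "nat \<Rightarrow> bool list set" where
  "vecs l = {xs. length xs = l}"

definition vadd :: "bool list \<Rightarrow> bool list \<Rightarrow> bool list" where
  "vadd xs ys = map2 (\<noteq>) xs ys"

definition dyadic_perm :: "bool list \<Rightarrow> bool list \<Rightarrow> bool list \<Rightarrow> nat" where
  "dyadic_perm a x y = (if y = vadd x a then 1 else 0)"

definition dyadic_sum :: "(nat \<Rightarrow> bool list) \<Rightarrow> nat \<Rightarrow> bool list \<Rightarrow> bool list \<Rightarrow> nat" where
  "dyadic_sum x w r c = (\<Sum>u<w. dyadic_perm (x u) r c)"

text \<open>Tanner graph of a matrix H with row index set Rs and column index set Cs: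
  check nodes Inl r, variable nodes Inr c, edge iff H r c = 1.\<close>

definition tanner_adj :: "'r set \<Rightarrow> 'c set \<Rightarrow> ('r \<Rightarrow> 'c \<Rightarrow> nat) \<Rightarrow> ('r + 'c) \<Rightarrow> ('r + 'c) \<Rightarrow> bool" where
  "tanner_adj Rs Cs H v w \<longleftrightarrow>
     (\<exists>r c. r \<in> Rs \<and> c \<in> Cs \<and> H r c = 1 \<and>
        ((v = Inl r \<and> w = Inr c) \<or> (v = Inr c \<and> w = Inl r)))"

text \<open>k-cycles of a (simple, undirected) graph given by a symmetric adjacency relation,
  identified with their edge sets: closed walks p_0 .. p_(k-1) p_0 with k edges,
  distinct vertices and distinct edges.\<close>

definition cycles :: "('v \<Rightarrow> 'v \<Rightarrow> bool) \<Rightarrow> nat \<Rightarrow> 'v set set set" where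
  "cycles adj k = {E. \<exists>p :: nat \<Rightarrow> 'v.
       k \<ge> 1 \<and> inj_on p {..<k} \<and> (\<forall>i<k. adj (p i) (p (Suc i mod k))) \<and>
       E = {{p i, p (Suc i mod k)} | i. i < k} \<and> card E = k}"

definition num_cycles :: "('v \<Rightarrow> 'v \<Rightarrow> bool) \<Rightarrow> nat \<Rightarrow> nat" where
  "num_cycles adj k = card (cycles adj k)"

definition girth :: "('v \<Rightarrow> 'v \<Rightarrow> bool) \<Rightarrow> enat" where
  "girth adj = Inf {enat k | k. cycles adj k \<noteq> {}}"

definition R_pairs :: "(nat \<Rightarrow> bool list) \<Rightarrow> nat \<Rightarrow> ((nat \<times> nat) \<times> (nat \<times> nat)) set" where
  "R_pairs x w = {((u, v), (u', v')). u < w \<and> v < w \<and> u' < w \<and> v' < w \<and>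
       u \<noteq> v \<and> u' \<noteq> v' \<and> u \<noteq> u' \<and> v \<noteq> v' \<and>
       vadd (x u) (x v) = vadd (x u') (x v')}"

definition R_c :: "(nat \<Rightarrow> bool list) \<Rightarrow> nat \<Rightarrow> nat" where
  "R_c x w = card {((u, v), (u', v')) \<in> R_pairs x w. u = v' \<and> v = u'}"

definition R_nc :: "(nat \<Rightarrow> bool list) \<Rightarrow> nat \<Rightarrow> nat" where
  "R_nc x w = card {((u, v), (u', v')) \<in> R_pairs x w. \<not> (u = v' \<and> v = u')}"

end

theory Submission
  imports Defs
begin


lemma ta_simps[simp]:
  "tanner_adj Rs Cs H (Inl r) (Inr c) = (r\<in>Rs \<and> c\<in>Cs \<and> H r c = 1)"
  "tanner_adj Rs Cs H (Inr c) (Inl r) = (r\<in>Rs \<and> c\<in>Cs \<and> H r c = 1)"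
  "\<not> tanner_adj Rs Cs H (Inl r) (Inl r')"
  "\<not> tanner_adj Rs Cs H (Inr c) (Inr c')"
  by (auto simp: tanner_adj_def)

definition K4 :: "'r \<Rightarrow> 'r \<Rightarrow> 'c \<Rightarrow> 'c \<Rightarrow> ('r + 'c) set set" where
  "K4 r1 r2 c1 c2 = {{Inl r1, Inr c1}, {Inr c1, Inl r2}, {Inl r2, Inr c2}, {Inr c2, Inl r1}}"

definition T4 :: "'r set \<Rightarrow> 'c set \<Rightarrow> ('r \<Rightarrow> 'c \<Rightarrow> nat) \<Rightarrow> ('r \<times> 'r \<times> 'c \<times> 'c) set" where
  "T4 Rs Cs H = {(r1,r2,c1,c2). r1\<in>Rs \<and> r2\<in>Rs \<and> c1\<in>Cs \<and> c2\<in>Cs \<and> r1\<noteq>r2 \<and> c1\<noteq>c2 \<and>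
      H r1 c1 = 1 \<and> H r2 c1 = 1 \<and> H r2 c2 = 1 \<and> H r1 c2 = 1}"

lemma set4: "{f i | i. i < (4::nat)} = {f 0, f 1, f 2, f 3}"
proof -
  have "{..<4::nat} = {0,1,2,3}" by auto
  have "{f i | i. i < (4::nat)} = f ` {..<4}" by auto
  then show ?thesis using \<open>{..<4::nat} = {0,1,2,3}\<close> by simp
qed

lemma cycles4_eq:
  "cycles (tanner_adj Rs Cs H) 4 = (\<lambda>(r1,r2,c1,c2). K4 r1 r2 c1 c2) ` T4 Rs Cs H"
proof
  show "cycles (tanner_adj Rs Cs H) 4 \<subseteq> (\<lambda>(r1,r2,c1,c2). K4 r1 r2 c1 c2) ` T4 Rs Cs H"
  proof
    fix E assume "E \<in> cycles (tanner_adj Rs Cs H) 4"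
    then obtain p where P: "(4::nat) \<ge> 1 \<and> inj_on p {..<4} \<and> (\<forall>i<4. tanner_adj Rs Cs H (p i) (p (Suc i mod 4))) \<and>
       E = {{p i, p (Suc i mod 4)} | i. i < 4} \<and> card E = 4"
      unfolding cycles_def mem_Collect_eq by (elim exE) (erule that)
    have inj: "inj_on p {..<4}" using P by (elim conjE)
    have ad: "\<forall>i<4. tanner_adj Rs Cs H (p i) (p (Suc i mod 4))" using P by (elim conjE)
    have E: "E = {{p i, p (Suc i mod 4)} | i. i < 4}" using P by (elim conjE)
    have m: "Suc 0 mod 4 = (1::nat)" "Suc 1 mod 4 = (2::nat)" "Suc 2 mod 4 = (3::nat)" "Suc 3 mod 4 = (0::nat)" by simp_all
    have E': "E = {{p 0, p 1}, {p 1, p 2}, {p 2, p 3}, {p 3, p 0}}"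
      unfolding E set4 m by (rule refl)
    have a0: "tanner_adj Rs Cs H (p 0) (p 1)" by (rule ad[rule_format, of 0, unfolded m]) simp
    have a1: "tanner_adj Rs Cs H (p 1) (p 2)" by (rule ad[rule_format, of 1, unfolded m]) simp
    have a2: "tanner_adj Rs Cs H (p 2) (p 3)" by (rule ad[rule_format, of 2, unfolded m]) simp
    have a3: "tanner_adj Rs Cs H (p 3) (p 0)" by (rule ad[rule_format, of 3, unfolded m]) simp
    have d02: "p 0 \<noteq> p 2" using inj_onD[OF inj, of 0 2] by auto
    have d13: "p 1 \<noteq> p 3" using inj_onD[OF inj, of 1 3] by auto
    show "E \<in> (\<lambda>(r1,r2,c1,c2). K4 r1 r2 c1 c2) ` T4 Rs Cs H"
    proof (cases "p 0")
      case (Inl r1)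
      with a0 obtain c1 where p1: "p 1 = Inr c1" by (cases "p 1") auto
      with a1 obtain r2 where p2: "p 2 = Inl r2" by (cases "p 2") auto
      with a2 obtain c2 where p3: "p 3 = Inr c2" by (cases "p 3") auto
      have "(r1,r2,c1,c2) \<in> T4 Rs Cs H" using a0 a1 a2 a3 d02 d13 Inl p1 p2 p3 by (auto simp: T4_def)
      moreover have "E = K4 r1 r2 c1 c2" unfolding E' K4_def Inl p1 p2 p3 by simp
      ultimately show ?thesis by force
    next
      case (Inr c1)
      with a0 obtain r1 where p1: "p 1 = Inl r1" by (cases "p 1") auto
      with a1 obtain c2 where p2: "p 2 = Inr c2" by (cases "p 2") auto
      with a2 obtain r2 where p3: "p 3 = Inl r2" by (cases "p 3") auto
      have "(r1,r2,c2,c1) \<in> T4 Rs Cs H" using a0 a1 a2 a3 d02 d13 Inr p1 p2 p3 by (auto simp: T4_def)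
      moreover have "E = K4 r1 r2 c2 c1" unfolding E' K4_def Inr p1 p2 p3 by blast
      ultimately show ?thesis by force
    qed
  qed
next
  show "(\<lambda>(r1,r2,c1,c2). K4 r1 r2 c1 c2) ` T4 Rs Cs H \<subseteq> cycles (tanner_adj Rs Cs H) 4"
  proof clarify
    fix r1 r2 c1 c2 assume t: "(r1,r2,c1,c2) \<in> T4 Rs Cs H"
    define p where "p = (\<lambda>i::nat. [Inl r1, Inr c1, Inl r2, Inr c2] ! i)"
    have p: "p 0 = Inl r1" "p 1 = Inr c1" "p 2 = Inl r2" "p 3 = Inr c2" by (simp_all add: p_def)
    have l4: "{..<4::nat} = {0,1,2,3}" by auto
    have rr: "r1 \<noteq> r2" "c1 \<noteq> c2" using t by (simp_all add: T4_def)
    have c: "card (K4 r1 r2 c1 c2) = 4" using rr unfolding K4_def by (simp add: doubleton_eq_iff)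
    have inj: "inj_on p {..<4}" unfolding l4 using rr p by simp
    have m: "Suc 0 mod 4 = (1::nat)" "Suc 1 mod 4 = (2::nat)" "Suc 2 mod 4 = (3::nat)" "Suc 3 mod 4 = (0::nat)" by simp_all
    have aa: "tanner_adj Rs Cs H (p 0) (p 1)" "tanner_adj Rs Cs H (p 1) (p 2)"
      "tanner_adj Rs Cs H (p 2) (p 3)" "tanner_adj Rs Cs H (p 3) (p 0)"
      using t unfolding p by (simp_all add: T4_def)
    have ad: "\<forall>i<4. tanner_adj Rs Cs H (p i) (p (Suc i mod 4))"
    proof (intro allI impI)
      fix i :: nat assume "i < 4"
      then have "i = 0 \<or> i = 1 \<or> i = 2 \<or> i = 3" by auto
      then show "tanner_adj Rs Cs H (p i) (p (Suc i mod 4))"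
      proof (elim disjE)
        assume "i = 0" then show ?thesis using aa(1) m(1) by (simp only:)
      next
        assume "i = 1" then show ?thesis using aa(2) m(2) by (simp only:)
      next
        assume "i = 2" then show ?thesis using aa(3) m(3) by (simp only:)
      next
        assume "i = 3" then show ?thesis using aa(4) m(4) by (simp only:)
      qed
    qed
    have E: "K4 r1 r2 c1 c2 = {{p i, p (Suc i mod 4)} | i. i < 4}" unfolding set4 K4_def m p by (rule refl)
    show "K4 r1 r2 c1 c2 \<in> cycles (tanner_adj Rs Cs H) 4"
      unfolding cycles_def mem_Collect_eq
      by (rule exI[of _ p]) (intro conjI; (fact | simp))
  qed
qed

lemma K4_Inl: "Inl s \<in> \<Union>(K4 r1 r2 c1 c2) \<longleftrightarrow> s = r1 \<or> s = r2"
  by (auto simp: K4_def)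
lemma K4_Inr: "Inr s \<in> \<Union>(K4 r1 r2 c1 c2) \<longleftrightarrow> s = c1 \<or> s = c2"
  by (auto simp: K4_def)

lemma K4_swap: "K4 r2 r1 c1 c2 = K4 r1 r2 c1 c2" "K4 r1 r2 c2 c1 = K4 r1 r2 c1 c2"
  by (auto simp: K4_def)

lemma T4_swap: "(r1,r2,c1,c2) \<in> T4 Rs Cs H \<Longrightarrow> (r2,r1,c1,c2) \<in> T4 Rs Cs H"
  "(r1,r2,c1,c2) \<in> T4 Rs Cs H \<Longrightarrow> (r1,r2,c2,c1) \<in> T4 Rs Cs H"
  by (auto simp: T4_def)

lemma fiber4:
  assumes t: "(r1,r2,c1,c2) \<in> T4 Rs Cs H"
  shows "{t \<in> T4 Rs Cs H. (\<lambda>(r1,r2,c1,c2). K4 r1 r2 c1 c2) t = K4 r1 r2 c1 c2}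
     = {(r1,r2,c1,c2),(r2,r1,c1,c2),(r1,r2,c2,c1),(r2,r1,c2,c1)}" (is "?F = ?S")
proof
  have k: "K4 r2 r1 c1 c2 = K4 r1 r2 c1 c2" "K4 r1 r2 c2 c1 = K4 r1 r2 c1 c2" "K4 r2 r1 c2 c1 = K4 r1 r2 c1 c2"
    by (auto simp: K4_def)
  show "?S \<subseteq> ?F" using t T4_swap[OF t] T4_swap(2)[OF T4_swap(1)[OF t]] k
    by (intro insert_subsetI empty_subsetI) (simp_all only: mem_Collect_eq case_prod_conv)
next
  show "?F \<subseteq> ?S"
  proof (rule subsetI)
    fix q assume q: "q \<in> ?F"
    obtain s1 s2 d1 d2 where qq: "q = (s1,s2,d1,d2)" by (cases q) auto
    have s: "(s1,s2,d1,d2) \<in> T4 Rs Cs H" and e: "K4 s1 s2 d1 d2 = K4 r1 r2 c1 c2" using q unfolding qq by auto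
    have "s1 \<noteq> s2" "d1 \<noteq> d2" "r1 \<noteq> r2" "c1 \<noteq> c2" using s t by (simp_all add: T4_def)
    moreover have "s1 = r1 \<or> s1 = r2" "s2 = r1 \<or> s2 = r2" "d1 = c1 \<or> d1 = c2" "d2 = c1 \<or> d2 = c2"
      using K4_Inl[of s1 s1 s2 d1 d2] K4_Inl[of s2 s1 s2 d1 d2] K4_Inr[of d1 s1 s2 d1 d2] K4_Inr[of d2 s1 s2 d1 d2]
      unfolding e K4_Inl K4_Inr by simp_all
    ultimately show "q \<in> ?S" unfolding qq by auto
  qed
qed

lemma count4:
  assumes "finite Rs" "finite Cs"
  shows "card (T4 Rs Cs H) = 4 * num_cycles (tanner_adj Rs Cs H) 4"
proof -
  let ?f = "\<lambda>(r1,r2,c1,c2). K4 r1 r2 c1 c2"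
  have fin: "finite (T4 Rs Cs H)"
    by (rule finite_subset[of _ "Rs \<times> Rs \<times> Cs \<times> Cs"]) (auto simp: T4_def assms)
  have "card (T4 Rs Cs H) = (\<Sum>t\<in>T4 Rs Cs H. 1)" by simp
  also have "\<dots> = (\<Sum>E\<in>?f ` T4 Rs Cs H. \<Sum>t\<in>{t \<in> T4 Rs Cs H. ?f t = E}. 1)"
    by (rule sum.group[symmetric]) (use fin in auto)
  also have "\<dots> = (\<Sum>E\<in>?f ` T4 Rs Cs H. 4)"
  proof (rule sum.cong[OF refl])
    fix E assume "E \<in> ?f ` T4 Rs Cs H"
    then obtain r1 r2 c1 c2 where t: "(r1,r2,c1,c2) \<in> T4 Rs Cs H" and E: "E = K4 r1 r2 c1 c2" by auto
    have "r1 \<noteq> r2" "c1 \<noteq> c2" using t by (simp_all add: T4_def)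
    then show "(\<Sum>t\<in>{t \<in> T4 Rs Cs H. ?f t = E}. 1) = (4::nat)"
      unfolding E fiber4[OF t] by simp
  qed
  also have "\<dots> = 4 * card (?f ` T4 Rs Cs H)" by simp
  finally show ?thesis unfolding num_cycles_def cycles4_eq .
qed

lemma ta_irrefl: "\<not> tanner_adj Rs Cs H v v"
  by (cases v) auto

lemma ta_bip: "tanner_adj Rs Cs H a b \<Longrightarrow> tanner_adj Rs Cs H b c \<Longrightarrow> \<not> tanner_adj Rs Cs H c a"
  by (cases a; cases b; cases c) auto

lemma small_cycles:
  assumes "k < 4"
  shows "cycles (tanner_adj Rs Cs H) k = {}"
proof (rule ccontr)
  assume "cycles (tanner_adj Rs Cs H) k \<noteq> {}"
  then obtain E where "E \<in> cycles (tanner_adj Rs Cs H) k" by blast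
  then obtain p where P: "k \<ge> 1 \<and> inj_on p {..<k} \<and> (\<forall>i<k. tanner_adj Rs Cs H (p i) (p (Suc i mod k))) \<and>
       E = {{p i, p (Suc i mod k)} | i. i < k} \<and> card E = k"
    unfolding cycles_def mem_Collect_eq by (elim exE) (erule that)
  have k1: "k \<ge> 1" and ad: "\<forall>i<k. tanner_adj Rs Cs H (p i) (p (Suc i mod k))"
    and E: "E = {{p i, p (Suc i mod k)} | i. i < k}" and c: "card E = k" using P by blast+
  have "k = 1 \<or> k = 2 \<or> k = 3" using k1 assms by auto
  then show False
  proof (elim disjE)
    assume "k = 1"
    then have "tanner_adj Rs Cs H (p 0) (p 0)" using ad by auto
    then show False by (simp add: ta_irrefl)
  next
    assume k: "k = 2"
    have "E = {{p 0, p 1}}"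
    proof -
      have "E = {{p i, p (Suc i mod 2)} | i. i < 2}" using E k by simp
      also have "\<dots> = {{p 0, p 1}, {p 1, p 0}}"
      proof -
        have "{..<2::nat} = {0,1}" by auto
        moreover have "{{p i, p (Suc i mod 2)} | i. i < 2} = (\<lambda>i. {p i, p (Suc i mod 2)}) ` {..<2}" by auto
        ultimately show ?thesis by simp
      qed
      finally show ?thesis by auto
    qed
    then show False using c k by simp
  next
    assume k: "k = 3"
    have m: "Suc 0 mod 3 = (1::nat)" "Suc 1 mod 3 = (2::nat)" "Suc 2 mod 3 = (0::nat)" by simp_all
    have a0: "tanner_adj Rs Cs H (p 0) (p 1)" by (rule ad[unfolded k, rule_format, of 0, unfolded m]) simp
    have a1: "tanner_adj Rs Cs H (p 1) (p 2)" by (rule ad[unfolded k, rule_format, of 1, unfolded m]) simp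
    have a2: "tanner_adj Rs Cs H (p 2) (p 0)" by (rule ad[unfolded k, rule_format, of 2, unfolded m]) simp
    show False using ta_bip[OF a0 a1] a2 by simp
  qed
qed

lemma girth4:
  assumes "T4 Rs Cs H \<noteq> {}"
  shows "girth (tanner_adj Rs Cs H) = 4"
proof -
  have ne: "cycles (tanner_adj Rs Cs H) 4 \<noteq> {}" using assms unfolding cycles4_eq by simp
  show ?thesis unfolding girth_def
  proof (rule antisym)
    show "Inf {enat k | k. cycles (tanner_adj Rs Cs H) k \<noteq> {}} \<le> 4"
      by (rule Inf_lower) (use ne in \<open>auto intro!: exI[of _ 4] simp: numeral_eq_enat\<close>)
    show "4 \<le> Inf {enat k | k. cycles (tanner_adj Rs Cs H) k \<noteq> {}}"
    proof (rule Inf_greatest)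
      fix y assume "y \<in> {enat k | k. cycles (tanner_adj Rs Cs H) k \<noteq> {}}"
      then obtain k where y: "y = enat k" and k: "cycles (tanner_adj Rs Cs H) k \<noteq> {}" by blast
      have "\<not> k < 4" using small_cycles k by blast
      then show "4 \<le> y" unfolding y by (simp add: numeral_eq_enat)
    qed
  qed
qed



lemma length_vadd[simp]: "length (vadd a b) = min (length a) (length b)"
  by (simp add: vadd_def)

lemma vadd_nth[simp]: "i < length a \<Longrightarrow> i < length b \<Longrightarrow> vadd a b ! i = (a ! i \<noteq> b ! i)"
  by (simp add: vadd_def)

lemma vecs_iff[simp]: "a \<in> vecs l \<longleftrightarrow> length a = l"
  by (simp add: vecs_def)

lemma vadd_cancel: "length a = l \<Longrightarrow> length b = l \<Longrightarrow> length c = l \<Longrightarrow> vadd a b = vadd a c \<Longrightarrow> b = c"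
  by (simp add: list_eq_iff_nth_eq) metis

lemma vadd_vadd: "length a = l \<Longrightarrow> length b = l \<Longrightarrow> vadd (vadd a b) b = a"
  by (auto simp add: list_eq_iff_nth_eq)

lemma vadd_eq_iff: "length a = l \<Longrightarrow> length b = l \<Longrightarrow> length c = l \<Longrightarrow> (c = vadd a b) = (b = vadd a c)"
  by (auto simp add: list_eq_iff_nth_eq)

lemma D_eq:
  assumes r: "r \<in> vecs l" and xv: "\<forall>u<w. x u \<in> vecs l" and inj: "inj_on x {..<w}"
  shows "dyadic_sum x w r c = 1 \<longleftrightarrow> (\<exists>u<w. c = vadd r (x u))"
proof -
  let ?S = "{u\<in>{..<w}. c = vadd r (x u)}"
  have "card ?S = (\<Sum>u\<in>?S. 1)" by simp
  also have "\<dots> = (\<Sum>u<w. if c = vadd r (x u) then 1 else 0)"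
    by (rule sum.inter_filter) simp
  also have "\<dots> = dyadic_sum x w r c" by (simp add: dyadic_sum_def dyadic_perm_def)
  finally have cS: "dyadic_sum x w r c = card ?S" by simp
  show ?thesis
  proof (cases "\<exists>u<w. c = vadd r (x u)")
    case True
    then obtain u where u: "u < w" "c = vadd r (x u)" by blast
    have "?S = {u}"
    proof (intro equalityI subsetI)
      fix u' assume "u' \<in> ?S"
      then have u': "u' < w" "c = vadd r (x u')" by auto
      have "x u' = x u" using vadd_cancel[of r l "x u'" "x u"] u u' r xv by auto
      then show "u' \<in> {u}" using inj u u' unfolding inj_on_def by auto
    qed (use u in auto)
    then show ?thesis using cS True by simp
  next
    case False
    then have "?S = {}" by auto
    then have "dyadic_sum x w r c = 0" unfolding cS by (simp only: card.empty)
    then show ?thesis using False by simp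
  qed
qed

definition phi :: "(nat \<Rightarrow> bool list) \<Rightarrow> bool list \<times> (nat \<times> nat) \<times> (nat \<times> nat) \<Rightarrow> bool list \<times> bool list \<times> bool list \<times> bool list" where
  "phi x q = (case q of (r, (u, v), (u', v')) \<Rightarrow> (r, vadd (vadd r (x u)) (x v), vadd r (x u), vadd r (x u')))"

lemma eqI_nth: "length a = l \<Longrightarrow> length b = l \<Longrightarrow> (\<And>i. i < l \<Longrightarrow> a ! i = b ! i) \<Longrightarrow> a = b"
  by (simp add: list_eq_iff_nth_eq)

lemma eqD_nth: "a = b \<Longrightarrow> i < length a \<Longrightarrow> a ! i = b ! i"
  by simp

lemma phi_bij:
  assumes xv: "\<forall>u<w. x u \<in> vecs l" and inj: "inj_on x {..<w}"
  shows "bij_betw (phi x) (vecs l \<times> R_pairs x w) (T4 (vecs l) (vecs l) (dyadic_sum x w))"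
proof -
  have L: "length (x u) = l" if "u < w" for u using xv that by simp
  have xinj: "u = u'" if "u < w" "u' < w" "x u = x u'" for u u' using inj that unfolding inj_on_def by auto
  have Dr: "dyadic_sum x w r c = 1 \<longleftrightarrow> (\<exists>u<w. c = vadd r (x u))" if "length r = l" for r c
    using D_eq[of r l w x c] that xv inj by simp
  show ?thesis
  proof (rule bij_betw_imageI)
    show "inj_on (phi x) (vecs l \<times> R_pairs x w)"
    proof (rule inj_onI)
      fix q1 q2 assume q1: "q1 \<in> vecs l \<times> R_pairs x w" and q2: "q2 \<in> vecs l \<times> R_pairs x w"
        and e': "phi x q1 = phi x q2"
      obtain r u v u' v' where q1e: "q1 = (r, (u,v), (u',v'))"
        by (metis prod.collapse)
      obtain s a b a' b' where q2e: "q2 = (s, (a,b), (a',b'))"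
        by (metis prod.collapse)
      have r: "r \<in> vecs l" and p: "((u,v),(u',v')) \<in> R_pairs x w" using q1 q1e by auto
      have s: "s \<in> vecs l" and q: "((a,b),(a',b')) \<in> R_pairs x w" using q2 q2e by auto
      have e: "phi x (r, (u,v), (u',v')) = phi x (s, (a,b), (a',b'))" using e' q1e q2e by simp
      have P: "u < w" "v < w" "u' < w" "v' < w" "vadd (x u) (x v) = vadd (x u') (x v')" using p by (auto simp: R_pairs_def)
      have Q: "a < w" "b < w" "a' < w" "b' < w" "vadd (x a) (x b) = vadd (x a') (x b')" using q by (auto simp: R_pairs_def)
      have e0: "r = s \<and> vadd (vadd r (x u)) (x v) = vadd (vadd s (x a)) (x b) \<and> vadd r (x u) = vadd s (x a) \<and> vadd r (x u') = vadd s (x a')"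
        using e by (auto simp: phi_def)
      have e1: "r = s" and e2: "vadd (vadd r (x u)) (x v) = vadd (vadd r (x a)) (x b)"
        and e3: "vadd r (x u) = vadd r (x a)" and e4: "vadd r (x u') = vadd r (x a')"
        using e0 by auto
      have lr: "length r = l" using r by simp
      have "x u = x a" using vadd_cancel[OF lr L L e3] P Q by simp
      then have ua: "u = a" using xinj P Q by blast
      have "x v = x b" using vadd_cancel[OF _ L L e2[unfolded ua]] P Q lr L by simp
      then have vb: "v = b" using xinj P Q by blast
      have "x u' = x a'" using vadd_cancel[OF lr L L e4] P Q by simp
      then have ua': "u' = a'" using xinj P Q by blast
      have "x v' = x b'"
      proof (rule eqI_nth[of _ l])
        fix i assume i: "i < l"
        have "vadd (x u') (x v') ! i = vadd (x a') (x b') ! i"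
          using P(5) Q(5) ua vb by simp
        then show "x v' ! i = x b' ! i" using i L P Q ua' by simp (metis (full_types))
      qed (use L P Q in auto)
      then have vb': "v' = b'" using xinj P Q by blast
      show "q1 = q2" unfolding q1e q2e using e1 ua vb ua' vb' by simp
    qed
  next
    show "phi x ` (vecs l \<times> R_pairs x w) = T4 (vecs l) (vecs l) (dyadic_sum x w)"
    proof (intro equalityI subsetI)
      fix t assume "t \<in> phi x ` (vecs l \<times> R_pairs x w)"
      then obtain r u v u' v' where r: "r \<in> vecs l" and p: "((u,v),(u',v')) \<in> R_pairs x w"
        and t: "t = phi x (r, (u,v), (u',v'))" by auto
      have P: "u < w" "v < w" "u' < w" "v' < w" "vadd (x u) (x v) = vadd (x u') (x v')"
        "u \<noteq> v" "u' \<noteq> v'" "u \<noteq> u'" "v \<noteq> v'" using p by (auto simp: R_pairs_def)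
      have lr: "length r = l" using r by simp
      define r2 where "r2 = vadd (vadd r (x u)) (x v)"
      define c1 where "c1 = vadd r (x u)"
      define c2 where "c2 = vadd r (x u')"
      have t': "t = (r, r2, c1, c2)" unfolding t r2_def c1_def c2_def phi_def by simp
      have l2: "length r2 = l" "length c1 = l" "length c2 = l" unfolding r2_def c1_def c2_def using lr L P by auto
      have E5: "(x u ! i \<noteq> x v ! i) = (x u' ! i \<noteq> x v' ! i)" if i: "i < l" for i
        using eqD_nth[OF P(5), of i] i L[OF P(1)] L[OF P(2)] L[OF P(3)] L[OF P(4)] by simp
      have "r \<noteq> r2"
      proof
        assume "r = r2"
        have "x u = x v"
        proof (rule eqI_nth[of _ l])
          fix i assume i: "i < l"
          have "r ! i = r2 ! i" using \<open>r = r2\<close> by simp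
          then show "x u ! i = x v ! i" unfolding r2_def using i lr L P by auto
        qed (use L P in auto)
        then show False using xinj P by blast
      qed
      moreover have "c1 \<noteq> c2"
      proof
        assume "c1 = c2"
        then have "x u = x u'" unfolding c1_def c2_def using vadd_cancel[OF lr L L] P by blast
        then show False using xinj P by blast
      qed
      moreover have "dyadic_sum x w r c1 = 1" using Dr[OF lr] P unfolding c1_def by blast
      moreover have "dyadic_sum x w r c2 = 1" using Dr[OF lr] P unfolding c2_def by blast
      moreover have "dyadic_sum x w r2 c1 = 1"
      proof -
        have "c1 = vadd r2 (x v)"
          by (rule eqI_nth[of _ l]) (use l2 L P lr in \<open>auto simp: r2_def c1_def\<close>)
        then show ?thesis using Dr[OF l2(1)] P by blast
      qed
      moreover have "dyadic_sum x w r2 c2 = 1"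
      proof -
        have "c2 = vadd r2 (x v')"
        proof (rule eqI_nth[of _ l])
          fix i assume i: "i < l"
          show "c2 ! i = vadd r2 (x v') ! i" using E5[OF i] i l2 L P lr by (auto simp: r2_def c2_def)
        qed (use l2 L P in auto)
        then show ?thesis using Dr[OF l2(1)] P by blast
      qed
      ultimately show "t \<in> T4 (vecs l) (vecs l) (dyadic_sum x w)"
        unfolding t' T4_def using lr l2 by simp
    next
      fix t assume "t \<in> T4 (vecs l) (vecs l) (dyadic_sum x w)"
      then obtain r1 r2 c1 c2 where t: "t = (r1,r2,c1,c2)" and T: "(r1,r2,c1,c2) \<in> T4 (vecs l) (vecs l) (dyadic_sum x w)"
        by (cases t) auto
      have l: "length r1 = l" "length r2 = l" "length c1 = l" "length c2 = l" and d: "r1 \<noteq> r2" "c1 \<noteq> c2"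
        using T by (simp_all add: T4_def)
      have h: "dyadic_sum x w r1 c1 = 1" "dyadic_sum x w r2 c1 = 1" "dyadic_sum x w r2 c2 = 1" "dyadic_sum x w r1 c2 = 1"
        using T by (simp_all add: T4_def)
      obtain u where u: "u < w" "c1 = vadd r1 (x u)" using h(1) Dr[OF l(1)] by blast
      obtain v where v: "v < w" "c1 = vadd r2 (x v)" using h(2) Dr[OF l(2)] by blast
      obtain v' where v': "v' < w" "c2 = vadd r2 (x v')" using h(3) Dr[OF l(2)] by blast
      obtain u' where u': "u' < w" "c2 = vadd r1 (x u')" using h(4) Dr[OF l(1)] by blast
      have N1: "c1 ! i = (r1 ! i \<noteq> x u ! i)" if "i < l" for i
        unfolding u(2) using that l L[OF u(1)] by simp
      have N2: "c1 ! i = (r2 ! i \<noteq> x v ! i)" if "i < l" for i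
        unfolding v(2) using that l L[OF v(1)] by simp
      have N3: "c2 ! i = (r2 ! i \<noteq> x v' ! i)" if "i < l" for i
        unfolding v'(2) using that l L[OF v'(1)] by simp
      have N4: "c2 ! i = (r1 ! i \<noteq> x u' ! i)" if "i < l" for i
        unfolding u'(2) using that l L[OF u'(1)] by simp
      note N = N1 N2 N3 N4
      have r2e: "r2 = vadd (vadd r1 (x u)) (x v)"
        by (rule eqI_nth[of _ l]) (use l L u v N in auto)
      have "u \<noteq> v"
      proof
        assume "u = v"
        have "r1 = r2" by (rule eqI_nth[of _ l]) (use l N \<open>u = v\<close> in auto)
        then show False using d by simp
      qed
      moreover have "u \<noteq> u'"
      proof
        assume "u = u'"
        have "c1 = c2" by (rule eqI_nth[of _ l]) (use l N \<open>u = u'\<close> in auto)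
        then show False using d by simp
      qed
      moreover have "v \<noteq> v'"
      proof
        assume "v = v'"
        have "c1 = c2" by (rule eqI_nth[of _ l]) (use l N \<open>v = v'\<close> in auto)
        then show False using d by simp
      qed
      moreover have "u' \<noteq> v'"
      proof
        assume "u' = v'"
        have "r1 = r2"
        proof (rule eqI_nth[of _ l])
          fix i assume "i < l"
          then show "r1 ! i = r2 ! i" using N(3)[of i] N(4)[of i] \<open>u' = v'\<close> by auto
        qed (use l in auto)
        then show False using d by simp
      qed
      moreover have "vadd (x u) (x v) = vadd (x u') (x v')"
      proof (rule eqI_nth[of _ l])
        fix i assume i: "i < l"
        show "vadd (x u) (x v) ! i = vadd (x u') (x v') ! i"
          using N(1)[OF i] N(2)[OF i] N(3)[OF i] N(4)[OF i] i L u v u' v' by auto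
      qed (use L u v u' v' in auto)
      ultimately have "((u,v),(u',v')) \<in> R_pairs x w" using u v u' v' by (simp add: R_pairs_def)
      moreover have "t = phi x (r1, (u,v), (u',v'))" unfolding t phi_def using r2e u u' by simp
      ultimately show "t \<in> phi x ` (vecs l \<times> R_pairs x w)" using l by force
    qed
  qed
qed

lemma card_vecs: "card (vecs l) = 2 ^ l" and finite_vecs: "finite (vecs l)"
proof -
  have e: "vecs l = {xs. set xs \<subseteq> (UNIV::bool set) \<and> length xs = l}" by (auto simp: vecs_def)
  show "card (vecs l) = 2 ^ l" unfolding e using card_lists_length_eq[of "UNIV::bool set" l] by simp
  show "finite (vecs l)" unfolding e by (rule finite_lists_length_eq) simp
qed

lemma finite_R_pairs: "finite (R_pairs x w)"
  by (rule finite_subset[of _ "({..<w} \<times> {..<w}) \<times> ({..<w} \<times> {..<w})"]) (auto simp: R_pairs_def)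

lemma card_filter_split: "finite A \<Longrightarrow> card {a\<in>A. P a} + card {a\<in>A. \<not> P a} = card A"
proof -
  assume f: "finite A"
  have "card ({a\<in>A. P a} \<union> {a\<in>A. \<not> P a}) = card {a\<in>A. P a} + card {a\<in>A. \<not> P a}"
    by (rule card_Un_disjoint) (use f in auto)
  moreover have "{a\<in>A. P a} \<union> {a\<in>A. \<not> P a} = A" by auto
  ultimately show ?thesis by simp
qed

lemma Rc_Rnc: "R_c x w + R_nc x w = card (R_pairs x w)"
proof -
  have "card {a\<in>R_pairs x w. (\<lambda>((u, v), (u', v')). u = v' \<and> v = u') a} + card {a\<in>R_pairs x w. \<not> (\<lambda>((u, v), (u', v')). u = v' \<and> v = u') a} = card (R_pairs x w)"
    by (rule card_filter_split[OF finite_R_pairs])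
  moreover have "R_c x w = card {a\<in>R_pairs x w. (\<lambda>((u, v), (u', v')). u = v' \<and> v = u') a}"
    unfolding R_c_def by (rule arg_cong[where f=card]) auto
  moreover have "R_nc x w = card {a\<in>R_pairs x w. \<not> (\<lambda>((u, v), (u', v')). u = v' \<and> v = u') a}"
    unfolding R_nc_def by (rule arg_cong[where f=card]) auto
  ultimately show ?thesis by simp
qed

theorem mainTheorem5:
  fixes l w :: nat and x :: "nat \<Rightarrow> bool list"
  assumes "l \<ge> 1"
    and "\<forall>u<w. x u \<in> vecs l"
    and "inj_on x {..<w}"
  shows "real (num_cycles (tanner_adj (vecs l) (vecs l) (dyadic_sum x w)) 4)
           = 2 ^ l / 4 * (real (R_c x w) + real (R_nc x w))
         \<and> (w \<ge> 2 \<longrightarrow> girth (tanner_adj (vecs l) (vecs l) (dyadic_sum x w)) = 4)"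
proof
  have bij: "bij_betw (phi x) (vecs l \<times> R_pairs x w) (T4 (vecs l) (vecs l) (dyadic_sum x w))"
    by (rule phi_bij) (use assms in auto)
  have "card (T4 (vecs l) (vecs l) (dyadic_sum x w)) = card (vecs l \<times> R_pairs x w)"
    using bij_betw_same_card[OF bij] by simp
  also have "\<dots> = 2 ^ l * (R_c x w + R_nc x w)" by (simp add: card_cartesian_product card_vecs Rc_Rnc)
  finally have "4 * num_cycles (tanner_adj (vecs l) (vecs l) (dyadic_sum x w)) 4 = 2 ^ l * (R_c x w + R_nc x w)"
    using count4[OF finite_vecs finite_vecs] by simp
  then have "real (4 * num_cycles (tanner_adj (vecs l) (vecs l) (dyadic_sum x w)) 4) = real (2 ^ l * (R_c x w + R_nc x w))"
    by (rule arg_cong)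
  then show "real (num_cycles (tanner_adj (vecs l) (vecs l) (dyadic_sum x w)) 4)
           = 2 ^ l / 4 * (real (R_c x w) + real (R_nc x w))" by simp
next
  show "w \<ge> 2 \<longrightarrow> girth (tanner_adj (vecs l) (vecs l) (dyadic_sum x w)) = 4"
  proof
    assume w: "w \<ge> 2"
    have bij: "bij_betw (phi x) (vecs l \<times> R_pairs x w) (T4 (vecs l) (vecs l) (dyadic_sum x w))"
      by (rule phi_bij) (use assms in auto)
    have x01: "x 0 \<noteq> x 1" using assms(3) w unfolding inj_on_def by (metis lessThan_iff less_le_trans one_less_numeral_iff pos2 semiring_norm(76) zero_neq_one)
    have l01: "length (x 0) = l" "length (x 1) = l" using assms(2) w by auto
    have "vadd (x 0) (x 1) = vadd (x 1) (x 0)"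
      by (rule eqI_nth[of _ l]) (use l01 in auto)
    then have "((0,1),(1,0)) \<in> R_pairs x w" using w by (simp add: R_pairs_def)
    moreover have "replicate l False \<in> vecs l" by simp
    ultimately have "phi x (replicate l False, (0,1),(1,0)) \<in> T4 (vecs l) (vecs l) (dyadic_sum x w)"
      using bij_betwE[OF bij] by blast
    then show "girth (tanner_adj (vecs l) (vecs l) (dyadic_sum x w)) = 4"
      by (intro girth4) blast
  qed
qed


end
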